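(* Let $\mathcal{A}$ be a non-unital Banach algebra. Then every approximately right invertible element $x\in\mathcal{A}$ is a left topological divisor of zero, i.e. $\inf\{\|xy\| : y\in\mathcal{A},\ \|y\|=1\}=0$.
   Context: An approximate identity in $\mathcal{A}$ is a net $(e_j)_{j\in J}$ with $\lim_j e_jy=\lim_j ye_j=y$ for all $y\in\mathcal{A}$. An element $x$ is approximately right invertible if there is a net $(r_j)$ in $\mathcal{A}$ such that $(xr_j)$ is an approximate identity in $\mathcal{A}$. *)

theory Defs
  imports "HOL-Analysis.Analysis"
begin

definition directed :: "('j \<Rightarrow> 'j \<Rightarrow> bool) \<Rightarrow> bool" where
  "directed le \<longleftrightarrow> (\<forall>i. le i i) \<and> (\<forall>i j k. le i j \<longrightarrow> le j k \<longrightarrow> le i k)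
     \<and> (\<forall>i j. \<exists>k. le i k \<and> le j k)"

definition net_tendsto :: "('j \<Rightarrow> 'j \<Rightarrow> bool) \<Rightarrow> ('j \<Rightarrow> 'a::metric_space) \<Rightarrow> 'a \<Rightarrow> bool" where
  "net_tendsto le f l \<longleftrightarrow> (\<forall>\<epsilon>>0. \<exists>i0. \<forall>i. le i0 i \<longrightarrow> dist (f i) l < \<epsilon>)"

definition approx_identity :: "('j \<Rightarrow> 'j \<Rightarrow> bool) \<Rightarrow> ('j \<Rightarrow> 'a::real_normed_algebra) \<Rightarrow> bool" where
  "approx_identity le e \<longleftrightarrow>
     (\<forall>y. net_tendsto le (\<lambda>j. e j * y) y \<and> net_tendsto le (\<lambda>j. y * e j) y)"

definition approx_right_invertible_via ::
  "('j \<Rightarrow> 'j \<Rightarrow> bool) \<Rightarrow> ('j \<Rightarrow> 'a::real_normed_algebra) \<Rightarrow> 'a \<Rightarrow> bool" where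
  "approx_right_invertible_via le r x \<longleftrightarrow> directed le \<and> approx_identity le (\<lambda>j. x * r j)"

definition non_unital :: "'a::real_normed_algebra itself \<Rightarrow> bool" where
  "non_unital _ \<longleftrightarrow> \<not> (\<exists>e::'a. \<forall>y. e * y = y \<and> y * e = y)"

definition left_top_divisor_of_zero :: "'a::real_normed_algebra \<Rightarrow> bool" where
  "left_top_divisor_of_zero x \<longleftrightarrow> Inf {norm (x * y) | y. norm y = 1} = 0"

end

theory Submission
  imports Defs
begin

definition netF :: "('j \<Rightarrow> 'j \<Rightarrow> bool) \<Rightarrow> 'j filter" where
  "netF le = (INF i. principal {k. le i k})"

lemma ev_netF:
  fixes le :: "'j \<Rightarrow> 'j \<Rightarrow> bool"
  assumes "directed le"
  shows "eventually P (netF le) \<longleftrightarrow> (\<exists>i. \<forall>k. le i k \<longrightarrow> P k)"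
proof -
  have "eventually P (INF i. principal {k. le i k}) \<longleftrightarrow> (\<exists>i\<in>UNIV. eventually P (principal {k. le i k}))"
  proof (rule eventually_INF_base)
    fix a b :: 'j
    obtain k where "le a k" "le b k" using assms unfolding directed_def by blast
    then show "\<exists>x\<in>UNIV. principal {k. le x k} \<le> inf (principal {k. le a k}) (principal {k. le b k})"
      using assms unfolding directed_def by (intro bexI[of _ k]) auto
  qed simp
  then show ?thesis by (simp add: netF_def eventually_principal)
qed

lemma netF_nontriv:
  assumes "directed le" shows "netF le \<noteq> bot"
proof
  assume "netF le = bot"
  then have "eventually (\<lambda>_. False) (netF le)" by simp
  then show False using assms by (auto simp: ev_netF directed_def)
qed

lemma net_tendsto_iff:
  assumes "directed le"
  shows "net_tendsto le f l \<longleftrightarrow> (f \<longlongrightarrow> l) (netF le)"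
  by (simp add: net_tendsto_def tendsto_iff ev_netF[OF assms])

theorem proposition2p22:
  fixes x :: "'a::{real_normed_algebra, banach}"
    and le :: "'j \<Rightarrow> 'j \<Rightarrow> bool" and r :: "'j \<Rightarrow> 'a"
  assumes "non_unital TYPE('a)"
    and "approx_right_invertible_via le r x"
  shows "left_top_divisor_of_zero x"
proof (rule ccontr)
  define G where "G = netF le"
  have dir: "directed le" using assms(2) by (simp add: approx_right_invertible_via_def)
  have Gnb: "G \<noteq> bot" using netF_nontriv[OF dir] by (simp add: G_def)
  have ai: "approx_identity le (\<lambda>j. x * r j)" using assms(2) by (simp add: approx_right_invertible_via_def)
  have L: "((\<lambda>j. x * r j * y) \<longlongrightarrow> y) G" for y
    using ai unfolding approx_identity_def net_tendsto_iff[OF dir] G_def by blast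
  have R: "((\<lambda>j. y * (x * r j)) \<longlongrightarrow> y) G" for y
    using ai unfolding approx_identity_def net_tendsto_iff[OF dir] G_def by blast
  assume nz: "\<not> left_top_divisor_of_zero x"
  define S where "S = {norm (x * y) | y. norm y = 1}"
  obtain y0 :: 'a where y0: "y0 \<noteq> 0"
  proof -
    have "\<not> (\<forall>y::'a. y = 0)"
    proof
      assume "\<forall>y::'a. y = 0"
      then have "\<exists>e::'a. \<forall>y. e * y = y \<and> y * e = y" by (metis mult_zero_left)
      then show False using assms(1) by (simp add: non_unital_def)
    qed
    then show ?thesis using that by blast
  qed
  have "norm (scaleR (1 / norm y0) y0) = 1" using y0 by simp
  then have Sne: "S \<noteq> {}" unfolding S_def by blast
  have Sbd: "bdd_below S" unfolding S_def by (rule bdd_belowI[of _ 0]) auto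
  have "Inf S \<ge> 0" using Sne unfolding S_def by (auto intro!: cInf_greatest)
  moreover have "Inf S \<noteq> 0" using nz by (simp add: left_top_divisor_of_zero_def S_def)
  ultimately have cpos: "Inf S > 0" by simp
  define c where "c = Inf S"
  have bb: "c * norm y \<le> norm (x * y)" for y
  proof (cases "y = 0")
    case False
    have "norm (scaleR (1 / norm y) y) = 1" using False by simp
    then have "norm (x * scaleR (1 / norm y) y) \<in> S" unfolding S_def by blast
    then have "c \<le> norm (x * scaleR (1 / norm y) y)" unfolding c_def using Sbd by (rule cInf_lower)
    also have "\<dots> = norm (x * y) / norm y" by (simp add: mult_scaleR_right)
    finally show ?thesis using False by (simp add: field_simps)
  qed simp
  define f where "f j = r j * x" for j
  have xf: "x * f j = x * r j * x" for j by (simp add: f_def mult.assoc)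
  have "cauchy_filter (filtermap f G)"
    unfolding cauchy_filter_metric_filtermap
  proof (intro allI impI)
    fix eps :: real assume "eps > 0"
    then have "c * eps / 2 > 0" using cpos by (simp add: c_def)
    then have "eventually (\<lambda>i. dist (x * r i * x) x < c * eps / 2) G"
      using tendstoD[OF L[of x]] by blast
    moreover
    have "dist (f i) (f k) < eps" if "dist (x * r i * x) x < c * eps / 2"
      "dist (x * r k * x) x < c * eps / 2" for i k
    proof -
      have "c * norm (f i - f k) \<le> norm (x * (f i - f k))" by (rule bb)
      also have "\<dots> = norm ((x * r i * x - x) - (x * r k * x - x))"
        by (simp add: xf algebra_simps)
      also have "\<dots> \<le> norm (x * r i * x - x) + norm (x * r k * x - x)" by (rule norm_triangle_ineq4)
      also have "\<dots> < c * eps" using that by (simp add: dist_norm)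
      finally show ?thesis using cpos by (simp add: dist_norm c_def)
    qed
    ultimately show "\<exists>P. eventually P G \<and> (\<forall>i k. P i \<and> P k \<longrightarrow> dist (f i) (f k) < eps)" by blast
  qed
  then have "convergent_filter (filtermap f G)" by (rule cauchy_filter_convergent)
  then obtain u where "filtermap f G \<le> nhds u" by (auto simp: convergent_filter_iff)
  then have fu: "(f \<longlongrightarrow> u) G" by (simp add: filterlim_def)
  have uy: "u * y = y" for y
  proof -
    have t1: "((\<lambda>j. f j * y) \<longlongrightarrow> u * y) G" by (intro tendsto_intros fu)
    have "((\<lambda>j. f j * y - y) \<longlongrightarrow> 0) G"
    proof (rule Lim_null_comparison)
      show "eventually (\<lambda>j. norm (f j * y - y) \<le> norm (x * r j * (x * y) - x * y) / c) G"
      proof (intro always_eventually allI)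
        fix j
        have "c * norm (f j * y - y) \<le> norm (x * (f j * y - y))" by (rule bb)
        also have "\<dots> = norm (x * r j * (x * y) - x * y)" by (simp add: f_def algebra_simps mult.assoc)
        finally show "norm (f j * y - y) \<le> norm (x * r j * (x * y) - x * y) / c"
          using cpos by (simp add: field_simps c_def)
      qed
      have "((\<lambda>j. x * r j * (x * y) - x * y) \<longlongrightarrow> 0) G"
        using L[of "x * y"] by (simp add: Lim_null[symmetric])
      then have "((\<lambda>j. norm (x * r j * (x * y) - x * y)) \<longlongrightarrow> 0) G"
        by (simp add: tendsto_norm_zero_iff)
      then show "((\<lambda>j. norm (x * r j * (x * y) - x * y) / c) \<longlongrightarrow> 0) G"
        using tendsto_divide_zero by blast
    qed
    then have t2: "((\<lambda>j. f j * y) \<longlongrightarrow> y) G" by (simp add: Lim_null[symmetric])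
    show ?thesis using tendsto_unique[OF Gnb t1 t2] .
  qed
  have yu: "y * u = y" for y
  proof -
    have t1: "((\<lambda>j. (y * u) * (x * r j)) \<longlongrightarrow> y * u) G" by (rule R)
    have "(y * u) * (x * r j) = y * (x * r j)" for j
      by (metis mult.assoc uy)
    then have t2: "((\<lambda>j. (y * u) * (x * r j)) \<longlongrightarrow> y) G" using R[of y] by simp
    show ?thesis using tendsto_unique[OF Gnb t1 t2] .
  qed
  have "\<exists>e::'a. \<forall>y. e * y = y \<and> y * e = y" using uy yu by blast
  then show False using assms(1) by (simp add: non_unital_def)
qed

end
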